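(* Let $J=\{j_1<\dots<j_k\}\subseteq[n]$ with complement $[n]\setminus J=\{h_1<\dots<h_{n-k}\}$, and let $\psi:\mathbb{R}^n\to\mathbb{R}^n$ be the coordinate permutation $\psi(x_1,\dots,x_n)=(x_{h_1},\dots,x_{h_{n-k}},x_{j_1},\dots,x_{j_k})$. Then $\psi$ maps the bridge polytope $\mathrm{Br}_J$ isomorphically onto the Bruhat interval polytope $\mathsf{Q}_{e,\pi(J)^{-1}}$. More precisely, $\psi$ sends the vertex $(z(1),\dots,z(n))$, $z\in S_J$, to the point of the permutation $z\circ\pi(J)^{-1}$, and $z\mapsto z\circ\pi(J)^{-1}$ is a bijection from $S_J$ onto the strong Bruhat interval $[e,\pi(J)^{-1}]=\{w\in S_n: e\le w\le \pi(J)^{-1}\}$; in particular the vertices $\pi(J)$ and $e$ of $\mathrm{Br}_J$ go to $e$ and $\pi(J)^{-1}$ respectively.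
   Context: For $J\subseteq[n]$, $S_J=\{\pi\in S_n:\ \pi(j)\ge j \text{ for } j\in J,\ \pi(j)\le j \text{ for } j\notin J\}$ and $\mathrm{Br}_J=\operatorname{conv}\{(\pi(1),\dots,\pi(n)):\pi\in S_J\}\subset\mathbb{R}^n$. For $J=\{j_1<\dots<j_k\}$ with complement $\{h_1<\dots<h_{n-k}\}$, $\pi(J)\in S_n$ is the permutation with $\pi(J)(h_i)=i$ for $1\le i\le n-k$ and $\pi(J)(j_i)=n-k+i$ for $1\le i\le k$; thus $\pi(J)^{-1}=(h_1,\dots,h_{n-k},j_1,\dots,j_k)$ in one-line notation. For $u\le v$ in the strong Bruhat order on $S_n$, the Bruhat interval polytope is $\mathsf{Q}_{u,v}=\operatorname{conv}\{(z(1),\dots,z(n)): z\in S_n,\ u\le z\le v\}$, where $\le$ is the strong Bruhat order. *)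

theory Defs
  imports "HOL-Analysis.Analysis"
begin

text \<open>Permutations of [n] = {1..n} are functions nat => nat permuting {1..n}
  (fixing everything outside). Points of R^n are functions nat => real,
  with coordinates indexed by 1..n and value 0 outside.\<close>

definition Sn :: "nat \<Rightarrow> (nat \<Rightarrow> nat) set" where
  "Sn n = {p. p permutes {1..n}}"

definition SJ :: "nat \<Rightarrow> nat set \<Rightarrow> (nat \<Rightarrow> nat) set" where
  "SJ n J = {p \<in> Sn n. (\<forall>j\<in>J. p j \<ge> j) \<and> (\<forall>j\<in>{1..n} - J. p j \<le> j)}"

definition pt :: "nat \<Rightarrow> (nat \<Rightarrow> nat) \<Rightarrow> (nat \<Rightarrow> real)" where
  "pt n z = (\<lambda>i. if i \<in> {1..n} then real (z i) else 0)"

definition convR :: "(nat \<Rightarrow> real) set \<Rightarrow> (nat \<Rightarrow> real) set" where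
  "convR S = {x. \<exists>F u. finite F \<and> F \<subseteq> S \<and> F \<noteq> {} \<and> (\<forall>y\<in>F. u y \<ge> 0) \<and>
      sum u F = 1 \<and> x = (\<lambda>i. \<Sum>y\<in>F. u y * y i)}"

definition Br :: "nat \<Rightarrow> nat set \<Rightarrow> (nat \<Rightarrow> real) set" where
  "Br n J = convR (pt n ` SJ n J)"

text \<open>pi(J): pi(J)(h_i) = i, pi(J)(j_i) = n - k + i.\<close>
definition piJ :: "nat \<Rightarrow> nat set \<Rightarrow> nat \<Rightarrow> nat" where
  "piJ n J x = (if x \<in> {1..n} - J then card {y \<in> {1..n} - J. y \<le> x}
               else if x \<in> J then n - card J + card {y \<in> J. y \<le> x}
               else x)"

inductive bruhat_le :: "nat \<Rightarrow> (nat \<Rightarrow> nat) \<Rightarrow> (nat \<Rightarrow> nat) \<Rightarrow> bool" for n where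
  refl: "u \<in> Sn n \<Longrightarrow> bruhat_le n u u"
| step: "bruhat_le n u v \<Longrightarrow> i \<in> {1..n} \<Longrightarrow> j \<in> {1..n} \<Longrightarrow> i < j \<Longrightarrow> v i < v j
          \<Longrightarrow> bruhat_le n u (v(i := v j, j := v i))"

definition Q :: "nat \<Rightarrow> (nat \<Rightarrow> nat) \<Rightarrow> (nat \<Rightarrow> nat) \<Rightarrow> (nat \<Rightarrow> real) set" where
  "Q n u v = convR (pt n ` {z \<in> Sn n. bruhat_le n u z \<and> bruhat_le n z v})"

definition psi :: "nat \<Rightarrow> nat set \<Rightarrow> (nat \<Rightarrow> real) \<Rightarrow> (nat \<Rightarrow> real)" where
  "psi n J x = (let L = sorted_list_of_set ({1..n} - J) @ sorted_list_of_set J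
                in (\<lambda>i. if i \<in> {1..n} then x (L ! (i - 1)) else 0))"

end

theory Submission
  imports Defs
begin


lemma card_le_nth:
  assumes "sorted_wrt (<) (xs::nat list)" "i < length xs"
  shows "card {y \<in> set xs. y \<le> xs!i} = Suc i"
proof -
  have "{y \<in> set xs. y \<le> xs!i} = (!) xs ` {..i}"
  proof (intro equalityI subsetI)
    fix y assume "y \<in> {y \<in> set xs. y \<le> xs!i}"
    then have y: "y \<in> set xs" "y \<le> xs!i" by auto
    then obtain j where j: "j < length xs" "y = xs!j" by (auto simp: in_set_conv_nth)
    have "j \<le> i"
    proof (rule ccontr)
      assume "\<not> j \<le> i"
      then have "xs!i < xs!j" using sorted_wrt_nth_less[OF assms(1), of i j] j by auto
      then show False using y j by simp
    qed
    then show "y \<in> (!) xs ` {..i}" using j by (intro image_eqI[of _ _ j]) auto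
  next
    fix y assume "y \<in> (!) xs ` {..i}"
    then obtain j where j: "j \<le> i" "y = xs!j" by auto
    have "y \<in> set xs" using j assms(2) by (simp add: nth_mem)
    moreover have "y \<le> xs!i"
      using j sorted_wrt_nth_less[OF assms(1), of j i] assms(2)
      by (cases "j = i") auto
    ultimately show "y \<in> {y \<in> set xs. y \<le> xs!i}" by simp
  qed
  moreover have "inj_on ((!) xs) {..i}"
    using assms by (intro inj_on_nth) (auto simp: strict_sorted_iff)
  ultimately show ?thesis by (simp add: card_image)
qed

locale BS = fixes n :: nat and J :: "nat set" assumes J: "J \<subseteq> {1..n}"
begin

definition "H = sorted_list_of_set ({1..n} - J)"
definition "Jl = sorted_list_of_set J"
definition "L = H @ Jl"
definition "m = card ({1..n} - J)"
definition "g a = (if a \<in> {1..n} then L ! (a - 1) else a)"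

lemma finJ: "finite J" using J finite_subset by blast

lemma lenH: "length H = m" unfolding H_def m_def by simp
lemma lenJl: "length Jl = card J" unfolding Jl_def by simp
lemma m_le: "m + card J = n"
proof -
  have "card ({1..n} - J) = n - card J" using J finJ by (simp add: card_Diff_subset)
  moreover have "card J \<le> n" using card_mono[OF _ J] by simp
  ultimately show ?thesis unfolding m_def by simp
qed
lemma lenL: "length L = n" unfolding L_def using lenH lenJl m_le by simp
lemma setH: "set H = {1..n} - J" unfolding H_def by simp
lemma setJl: "set Jl = J" unfolding Jl_def using finJ by simp
lemma sH: "sorted_wrt (<) H" unfolding H_def by simp
lemma sJl: "sorted_wrt (<) Jl" unfolding Jl_def by simp
lemma setL: "set L = {1..n}" unfolding L_def using setH setJl J by auto
lemma distL: "distinct L" unfolding L_def using setH setJl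
  by (auto simp: H_def Jl_def)

lemma g_low: "a \<in> {1..n} \<Longrightarrow> a \<le> m \<Longrightarrow> g a = H ! (a - 1)"
  unfolding g_def L_def using lenH by (auto simp: nth_append)
lemma g_high: "a \<in> {1..n} \<Longrightarrow> m < a \<Longrightarrow> g a = Jl ! (a - 1 - m)"
  unfolding g_def L_def using lenH by (auto simp: nth_append)

lemma g_perm: "g permutes {1..n}"
proof (rule bij_imp_permutes)
  have b1: "bij_betw (\<lambda>a. a - 1) {1..n} {..<n}"
    by (rule bij_betw_byWitness[where f'="\<lambda>a. a + 1"]) auto
  have b2: "bij_betw ((!) L) {..<n} {1..n}"
    using bij_betw_nth[OF distL] lenL setL by simp
  have "bij_betw ((!) L \<circ> (\<lambda>a. a - 1)) {1..n} {1..n}"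
    using bij_betw_trans[OF b1 b2] .
  then show "bij_betw g {1..n} {1..n}"
    by (rule bij_betw_cong[THEN iffD1, rotated]) (auto simp: g_def)
qed (auto simp: g_def)

lemma g2: "a \<in> {1..n} \<Longrightarrow> b \<in> {1..n} \<Longrightarrow> a < b \<Longrightarrow> b \<le> m \<Longrightarrow> g a < g b"
  using g_low sorted_wrt_nth_less[OF sH, of "a-1" "b-1"] lenH by auto
lemma g3: "a \<in> {1..n} \<Longrightarrow> b \<in> {1..n} \<Longrightarrow> a < b \<Longrightarrow> m < a \<Longrightarrow> g a < g b"
  using g_high sorted_wrt_nth_less[OF sJl, of "a-1-m" "b-1-m"] lenJl m_le by auto

lemma piJ_g: "piJ n J (g a) = a"
proof (cases "a \<in> {1..n}")
  case False
  then show ?thesis using J unfolding piJ_def g_def by auto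
next
  case True
  show ?thesis
  proof (cases "a \<le> m")
    case True
    have i: "a - 1 < length H" using True \<open>a \<in> {1..n}\<close> lenH by auto
    have mem: "H ! (a-1) \<in> {1..n} - J" using nth_mem[OF i] setH by auto
    have "card {y \<in> {1..n} - J. y \<le> H!(a-1)} = a"
      using card_le_nth[OF sH i] setH \<open>a \<in> {1..n}\<close> by auto
    then show ?thesis using g_low[OF \<open>a \<in> {1..n}\<close> True] mem unfolding piJ_def by simp
  next
    case False
    have i: "a - 1 - m < length Jl" using False \<open>a \<in> {1..n}\<close> lenJl m_le by auto
    have mem: "Jl ! (a-1-m) \<in> J" using nth_mem[OF i] setJl by auto
    have "card {y \<in> J. y \<le> Jl!(a-1-m)} = a - m"
      using card_le_nth[OF sJl i] setJl False \<open>a \<in> {1..n}\<close> by auto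
    then show ?thesis using g_high[OF \<open>a \<in> {1..n}\<close>] False mem m_le
      unfolding piJ_def by auto
  qed
qed

lemma piJ_eq: "piJ n J = inv g"
proof
  fix y
  have "piJ n J y = piJ n J (g (inv g y))" using permutes_inverses(1)[OF g_perm] by simp
  also have "\<dots> = inv g y" by (rule piJ_g)
  finally show "piJ n J y = inv g y" .
qed

lemma piJ_perm: "piJ n J permutes {1..n}" using piJ_eq permutes_inv[OF g_perm] by simp
lemma inv_piJ: "inv (piJ n J) = g" using piJ_eq permutes_inv_inv[OF g_perm] by simp

end



lemma sw_perm:
  assumes "v \<in> Sn n" "i \<in> {1..n}" "j \<in> {1..n}"
  shows "v(i := v j, j := v i) \<in> Sn n"
proof -
  have "v(i := v j, j := v i) = v \<circ> Transposition.transpose i j"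
    by (auto simp: fun_eq_iff Transposition.transpose_def)
  then show ?thesis using assms permutes_compose[OF permutes_swap_id[of i "{1..n}" j]]
    unfolding Sn_def by auto
qed

lemma bruhat_Sn: "bruhat_le n u v \<Longrightarrow> u \<in> Sn n \<and> v \<in> Sn n"
proof (induction rule: bruhat_le.induct)
  case (step u v i j)
  then show ?case using sw_perm[of v n i j] by blast
qed simp

lemma bruhat_prepend:
  assumes "bruhat_le n u v" "x \<in> Sn n" "i \<in> {1..n}" "j \<in> {1..n}" "i < j" "x i < x j"
    "u = x(i := x j, j := x i)"
  shows "bruhat_le n x v"
  using assms
proof (induction rule: bruhat_le.induct)
  case (refl u)
  have "bruhat_le n x (x(i := x j, j := x i))" using bruhat_le.step[OF bruhat_le.refl[OF refl(2)] refl(3-6)] .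
  then show ?case using refl(7) by metis
next
  case (step u v a b)
  then show ?case using bruhat_le.step by blast
qed

definition fsum :: "nat \<Rightarrow> (nat \<Rightarrow> nat) \<Rightarrow> nat" where
  "fsum n w = (\<Sum>a\<in>{1..n}. a * w a)"

lemma fsum_swap:
  assumes "i \<in> {1..n}" "j \<in> {1..n}" "i < j" "w i < w j"
  shows "fsum n (w(i := w j, j := w i)) < fsum n w"
proof -
  let ?w = "w(i := w j, j := w i)"
  let ?S = "{1..n} - {i, j}"
  have S: "{1..n} = insert i (insert j ?S)" using assms by auto
  have fin: "finite ?S" by simp
  have e1: "fsum n w = i * w i + (j * w j + (\<Sum>a\<in>?S. a * w a))"
    unfolding fsum_def using assms by (subst S) (simp add: sum.insert_if)
  have e2: "fsum n ?w = i * w j + (j * w i + (\<Sum>a\<in>?S. a * ?w a))"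
    unfolding fsum_def using assms by (subst S) (simp add: sum.insert_if)
  have e3: "(\<Sum>a\<in>?S. a * ?w a) = (\<Sum>a\<in>?S. a * w a)" by (rule sum.cong) auto
  obtain d where d: "j = i + d" "d > 0" using assms by (metis add_diff_inverse_nat less_imp_le_nat not_less zero_less_diff)
  obtain e where e: "w j = w i + e" "e > 0" using assms by (metis add_diff_inverse_nat less_imp_le_nat not_less zero_less_diff)
  have "i * w j + j * w i < i * w i + j * w j"
    using d e by (simp add: algebra_simps)
  then show ?thesis using e1 e2 e3 by linarith
qed

lemma fsum_bound: "w \<in> Sn n \<Longrightarrow> fsum n w \<le> n * n * n"
proof -
  assume "w \<in> Sn n"
  then have "\<And>a. a \<in> {1..n} \<Longrightarrow> w a \<le> n" unfolding Sn_def
    using permutes_in_image by fastforce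
  then have "fsum n w \<le> (\<Sum>a\<in>{1..n}. n * n)" unfolding fsum_def
    by (intro sum_mono) (simp add: mult_le_mono)
  then show ?thesis by simp
qed

lemma perm_exists_desc:
  assumes "w \<in> Sn n" "w \<noteq> id"
  shows "\<exists>i j. i \<in> {1..n} \<and> j \<in> {1..n} \<and> i < j \<and> w j < w i"
proof -
  have wp: "w permutes {1..n}" using assms unfolding Sn_def by auto
  have "\<exists>a. w a \<noteq> a" using assms by auto
  then obtain a where a: "w a \<noteq> a" "\<forall>b<a. w b = b" using exists_least_iff[of "\<lambda>a. w a \<noteq> a"] by auto
  have ain: "a \<in> {1..n}" using a permutes_not_in[OF wp] by auto
  obtain r where r: "r \<in> {1..n}" "w r = a" using permutes_image[OF wp] ain by (metis imageE)
  have "r \<noteq> a" using r a by auto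
  moreover have "\<not> r < a" using a r by auto
  ultimately have ra: "a < r" by auto
  have "w a \<noteq> w r" using ra permutes_inj[OF wp] by (metis inj_eq less_irrefl)
  have "\<not> w a < a"
  proof
    assume "w a < a"
    then have "w (w a) = w a" using a by auto
    then have "w a = a" using permutes_inj[OF wp] by (metis inj_eq)
    then show False using a by simp
  qed
  then have "a < w a" using a by auto
  then show ?thesis using ain r ra by (intro exI[of _ a] exI[of _ r]) auto
qed

lemma id_le_all: "w \<in> Sn n \<Longrightarrow> bruhat_le n id w"
proof (induction "n * n * n - fsum n w" arbitrary: w rule: less_induct)
  case less
  show ?case
  proof (cases "w = id")
    case True
    then show ?thesis using bruhat_le.refl[of id n] by (simp add: Sn_def permutes_id)
  next
    case False
    obtain i j where ij: "i \<in> {1..n}" "j \<in> {1..n}" "i < j" "w j < w i"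
      using perm_exists_desc[OF less.prems False] by blast
    define u where "u = w(i := w j, j := w i)"
    have uS: "u \<in> Sn n" unfolding u_def using sw_perm[OF less.prems ij(1,2)] .
    have wu: "w = u(i := u j, j := u i)" unfolding u_def using ij by (auto simp: fun_eq_iff)
    have "fsum n w < fsum n u" using fsum_swap[of i n j u] ij wu unfolding u_def by auto
    moreover have "fsum n u \<le> n*n*n" using fsum_bound[OF uS] .
    ultimately have "n*n*n - fsum n u < n*n*n - fsum n w" by linarith
    then have "bruhat_le n id u" using less.hyps uS by blast
    from bruhat_le.step[OF this ij(1,2,3)] show ?thesis using ij wu unfolding u_def by auto
  qed
qed




context BS begin

definition "ok a x \<longleftrightarrow> (a \<le> m \<longrightarrow> x \<le> g a) \<and> (m < a \<longrightarrow> g a \<le> x)"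
definition "inT w \<longleftrightarrow> w \<in> Sn n \<and> (\<forall>a\<in>{1..n}. ok a (w a))"

lemma gS: "g \<in> Sn n" using g_perm unfolding Sn_def by simp
lemma g_inT: "inT g" unfolding inT_def ok_def using gS by auto
lemma g_inj: "g a = g b \<Longrightarrow> a = b" using permutes_inj[OF g_perm] by (meson injD)

lemma inT_swap:
  assumes "inT w" "i \<in> {1..n}" "j \<in> {1..n}" "i < j" "ok i (w j)" "ok j (w i)"
  shows "inT (w(i := w j, j := w i))"
proof -
  have S: "w \<in> Sn n" and A: "\<And>a. a \<in> {1..n} \<Longrightarrow> ok a (w a)" using assms(1) unfolding inT_def by auto
  have "ok a ((w(i := w j, j := w i)) a)" if "a \<in> {1..n}" for a
  proof -
    consider "a = j" | "a = i" | "a \<noteq> i" "a \<noteq> j" by blast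
    then show ?thesis
    proof cases
      case 1 then show ?thesis using assms(6) by simp
    next
      case 2 then show ?thesis using assms(4,5) by simp
    next
      case 3 then show ?thesis using A[OF that] by simp
    qed
  qed
  then show ?thesis using sw_perm[OF S assms(2,3)] unfolding inT_def by blast
qed

lemma inT_down:
  assumes "inT (v(i := v j, j := v i))" "v \<in> Sn n" "i \<in> {1..n}" "j \<in> {1..n}" "i < j" "v i < v j"
  shows "inT v"
proof -
  let ?v = "v(i := v j, j := v i)"
  have A: "\<And>a. a \<in> {1..n} \<Longrightarrow> ok a (?v a)" using assms(1) unfolding inT_def by blast
  have "?v i = v j" using assms(5) by simp
  then have oi: "ok i (v j)" using A[OF assms(3)] by simp
  have "?v j = v i" by simp
  then have oj: "ok j (v i)" using A[OF assms(4)] by simp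
  have gij: "i \<le> m \<Longrightarrow> j \<le> m \<Longrightarrow> g i < g j" using g2[OF assms(3,4,5)] by simp
  have gij2: "m < i \<Longrightarrow> g i < g j" using g3[OF assms(3,4,5)] by simp
  have oii: "ok i (v i)" unfolding ok_def
  proof (intro conjI impI)
    assume "i \<le> m" then show "v i \<le> g i" using oi assms(6) unfolding ok_def by simp
  next
    assume "m < i" then show "g i \<le> v i" using oj gij2 assms(5) unfolding ok_def by simp
  qed
  have ojj: "ok j (v j)" unfolding ok_def
  proof (intro conjI impI)
    assume "j \<le> m" then show "v j \<le> g j" using oi gij assms(5) unfolding ok_def by simp
  next
    assume "m < j" then show "g j \<le> v j" using oj assms(6) unfolding ok_def by simp
  qed
  have "ok a (v a)" if "a \<in> {1..n}" for a
  proof (cases "a = i \<or> a = j")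
    case True then show ?thesis using oii ojj by blast
  next
    case False then have "?v a = v a" by simp
    then show ?thesis using A[OF that] by simp
  qed
  then show ?thesis using assms(2) unfolding inT_def by blast
qed

lemma bruhat_inT: "bruhat_le n u v \<Longrightarrow> inT v \<Longrightarrow> inT u"
proof (induction rule: bruhat_le.induct)
  case (refl u) then show ?case by simp
next
  case (step u v i j)
  have vS: "v \<in> Sn n" using bruhat_Sn[OF step.hyps(1)] by simp
  have "inT v" using inT_down[OF step.prems vS step.hyps(2-5)] .
  then show ?case using step.IH by simp
qed

lemma perm_ex: "w \<in> Sn n \<Longrightarrow> y \<in> {1..n} \<Longrightarrow> \<exists>r\<in>{1..n}. w r = y"
proof -
  assume wS: "w \<in> Sn n" and y: "y \<in> {1..n}"
  have wp: "w permutes {1..n}" using wS unfolding Sn_def by simp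
  have "y \<in> w ` {1..n}" using y unfolding permutes_image[OF wp] .
  then obtain r where "r \<in> {1..n}" "y = w r" by (rule imageE)
  then show ?thesis by blast
qed
lemma g_in: "a \<in> {1..n} \<Longrightarrow> g a \<in> {1..n}" by (rule iffD2[OF permutes_in_image[OF g_perm]])

lemma greedy:
  assumes "inT w" "w \<noteq> g"
  shows "\<exists>i j. i \<in> {1..n} \<and> j \<in> {1..n} \<and> i < j \<and> w i < w j \<and> inT (w(i := w j, j := w i))"
proof -
  have wS: "w \<in> Sn n" using assms(1) unfolding inT_def by blast
  have okw: "\<And>a. a \<in> {1..n} \<Longrightarrow> ok a (w a)" using assms(1) unfolding inT_def by blast
  have wpm: "w permutes {1..n}" using wS unfolding Sn_def by simp
  have "\<exists>a. a \<in> {1..n} \<and> w a \<noteq> g a"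
  proof (rule ccontr)
    assume nex: "\<not> (\<exists>a. a \<in> {1..n} \<and> w a \<noteq> g a)"
    have "w a = g a" for a
    proof (cases "a \<in> {1..n}")
      case True then show ?thesis using nex by blast
    next
      case False then show ?thesis using permutes_not_in[OF g_perm False] permutes_not_in[OF wpm False] by simp
    qed
    then have "w = g" by (rule ext)
    then show False using assms by simp
  qed
  from exists_least_iff[THEN iffD1, OF this] obtain p where
    p: "p \<in> {1..n}" "w p \<noteq> g p" and pl0: "\<forall>b<p. \<not> (b \<in> {1..n} \<and> w b \<noteq> g b)"
    by blast
  have pl: "\<And>b. b < p \<Longrightarrow> b \<in> {1..n} \<Longrightarrow> w b = g b" using pl0 by blast
  have after: "\<And>y r. r \<in> {1..n} \<Longrightarrow> w r = g y \<Longrightarrow> r \<noteq> p \<Longrightarrow> p \<le> y \<Longrightarrow> p < r"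
  proof (rule ccontr)
    fix y r assume r: "r \<in> {1..n}" "w r = g y" "r \<noteq> p" "p \<le> y" "\<not> p < r"
    then have "r < p" by simp
    then have "w r = g r" using pl r(1) by blast
    then have "y = r" using g_inj r(2) by metis
    then show False using r by simp
  qed
  obtain q where q: "q \<in> {1..n}" "w q = g p" using perm_ex[OF wS g_in[OF p(1)]] by blast
  have "q \<noteq> p" using q(2) p(2) by auto
  then have pq: "p < q" using after[OF q] by simp
  have okq: "ok q (g p)" using okw[OF q(1)] q by simp
  have pm: "p \<le> m"
  proof (rule ccontr)
    assume "\<not> p \<le> m"
    then have "g p < g q" using g3 p(1) q(1) pq by auto
    then show False using okq pq \<open>\<not> p \<le> m\<close> unfolding ok_def by auto
  qed
  have wp: "w p < g p" using okw[OF p(1)] pm p(2) unfolding ok_def by auto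
  show ?thesis
  proof (cases "q \<le> m \<or> g q \<le> w p")
    case True
    have "ok p (w q)" using q pm unfolding ok_def by auto
    moreover have "ok q (w p)"
      using True wp g2[OF p(1) q(1) pq] pq unfolding ok_def by auto
    ultimately have "inT (w(p := w q, q := w p))" using inT_swap[OF assms(1) p(1) q(1) pq] by blast
    then show ?thesis using p(1) q pq wp by (intro exI[of _ p] exI[of _ q]) simp
  next
    case False
    then have qm: "m < q" "w p < g q" by auto
    have "g q \<le> g p" using okq qm unfolding ok_def by simp
    moreover have "g q \<noteq> g p" using g_inj[of q p] pq by auto
    ultimately have gqp: "g q < g p" by simp
    obtain r where r: "r \<in> {1..n}" "w r = g q" using perm_ex[OF wS g_in[OF q(1)]] by blast
    have "r \<noteq> p" using r qm(2) by auto
    then have rp: "p < r" using after[OF r] pq by simp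
    show ?thesis
    proof (cases "r \<le> m")
      case True
      have "ok p (w r)" using r gqp pm unfolding ok_def by auto
      moreover have "ok r (w p)"
        using True wp g2[OF p(1) r(1) rp] rp unfolding ok_def by auto
      ultimately have "inT (w(p := w r, r := w p))" using inT_swap[OF assms(1) p(1) r(1) rp] by blast
      then show ?thesis using p(1) r rp qm by (intro exI[of _ p] exI[of _ r]) simp
    next
      case False
      have okr: "ok r (g q)" using okw[OF r(1)] r by simp
      have "r \<noteq> q" using r q gqp by auto
      moreover have "\<not> q < r"
      proof
        assume "q < r" then have "g q < g r" using g3 q(1) r(1) qm by auto
        then show False using okr False unfolding ok_def by auto
      qed
      ultimately have rq: "r < q" by auto
      have "ok r (w q)" using q gqp okr False unfolding ok_def by auto
      moreover have "ok q (w r)" using r qm unfolding ok_def by auto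
      ultimately have "inT (w(r := w q, q := w r))" using inT_swap[OF assms(1) r(1) q(1) rq] by blast
      then show ?thesis using r q rq gqp by (intro exI[of _ r] exI[of _ q]) simp
    qed
  qed
qed

lemma le_g: "inT w \<Longrightarrow> bruhat_le n w g"
proof (induction "fsum n w" arbitrary: w rule: less_induct)
  case less
  show ?case
  proof (cases "w = g")
    case True
    then show ?thesis using bruhat_le.refl[OF gS] by simp
  next
    case False
    then obtain i j where ij: "i \<in> {1..n}" "j \<in> {1..n}" "i < j" "w i < w j"
      and T: "inT (w(i := w j, j := w i))" using greedy[OF less.prems] by blast
    have "fsum n (w(i := w j, j := w i)) < fsum n w" using fsum_swap[OF ij] .
    then have "bruhat_le n (w(i := w j, j := w i)) g" using less.hyps T by blast
    then show ?thesis using bruhat_prepend[OF _ _ ij] less.prems unfolding inT_def by blast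
  qed
qed

lemma T_char: "{w \<in> Sn n. bruhat_le n id w \<and> bruhat_le n w g} = {w. inT w}"
  using le_g bruhat_inT[OF _ g_inT] id_le_all unfolding inT_def by blast


end



lemma convR_image:
  fixes h :: "(nat \<Rightarrow> real) \<Rightarrow> (nat \<Rightarrow> real)"
  assumes inj: "inj_on h A"
    and lin: "\<And>F u. h (\<lambda>i. \<Sum>y\<in>F. u y * y i) = (\<lambda>i. \<Sum>y\<in>F. u y * h y i)"
  shows "h ` convR A = convR (h ` A)"
proof (intro equalityI subsetI)
  fix x assume "x \<in> h ` convR A"
  then obtain x0 where x0: "x0 \<in> convR A" "x = h x0" by blast
  then obtain F u where F: "finite F" "F \<subseteq> A" "F \<noteq> {}" "\<forall>y\<in>F. u y \<ge> 0" "sum u F = 1"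
    "x0 = (\<lambda>i. \<Sum>y\<in>F. u y * y i)" unfolding convR_def by blast
  have injF: "inj_on h F" using inj F(2) inj_on_subset by blast
  define u' where "u' = (\<lambda>z. u (the_inv_into F h z))"
  have u'h: "\<And>y. y \<in> F \<Longrightarrow> u' (h y) = u y" unfolding u'_def using the_inv_into_f_f[OF injF] by simp
  have "x = (\<lambda>i. \<Sum>y\<in>F. u y * h y i)" using x0(2) F(6) lin by simp
  also have "\<dots> = (\<lambda>i. \<Sum>z\<in>h ` F. u' z * z i)"
    by (subst sum.reindex[OF injF]) (simp add: u'h)
  finally have xe: "x = (\<lambda>i. \<Sum>z\<in>h ` F. u' z * z i)" .
  have "sum u' (h ` F) = 1" using F(5) by (subst sum.reindex[OF injF]) (simp add: u'h)
  moreover have "\<forall>z\<in>h ` F. u' z \<ge> 0" using F(4) u'h by auto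
  ultimately show "x \<in> convR (h ` A)" unfolding convR_def using F xe
    by (intro CollectI exI[of _ "h ` F"] exI[of _ u']) auto
next
  fix x assume "x \<in> convR (h ` A)"
  then obtain F' u where F: "finite F'" "F' \<subseteq> h ` A" "F' \<noteq> {}" "\<forall>y\<in>F'. u y \<ge> 0" "sum u F' = 1"
    "x = (\<lambda>i. \<Sum>y\<in>F'. u y * y i)" unfolding convR_def by blast
  define F where "F = {y \<in> A. h y \<in> F'}"
  have hF: "h ` F = F'" using F(2) unfolding F_def by auto
  have injF: "inj_on h F" using inj unfolding F_def by (rule inj_on_subset) auto
  have finF: "finite F" using F(1) hF injF finite_imageD by blast
  have "x = (\<lambda>i. \<Sum>y\<in>F. u (h y) * h y i)"
    unfolding F(6) hF[symmetric] by (simp add: sum.reindex[OF injF])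
  also have "\<dots> = h (\<lambda>i. \<Sum>y\<in>F. u (h y) * y i)" using lin by simp
  finally have xe: "x = h (\<lambda>i. \<Sum>y\<in>F. u (h y) * y i)" .
  have "(\<lambda>i. \<Sum>y\<in>F. u (h y) * y i) \<in> convR A" unfolding convR_def
  proof (intro CollectI exI[of _ F] exI[of _ "u \<circ> h"] conjI)
    show "finite F" by fact
    show "F \<subseteq> A" unfolding F_def by auto
    show "F \<noteq> {}" using F(3) hF by auto
    show "\<forall>y\<in>F. 0 \<le> (u \<circ> h) y" using F(4) hF by auto
    show "sum (u \<circ> h) F = 1" using F(5) hF sum.reindex[OF injF, of u] by simp
  qed simp
  then show "x \<in> h ` convR A" using xe by blast
qed

context BS begin

lemma psi_eq: "psi n J x = (\<lambda>i. if i \<in> {1..n} then x (g i) else 0)"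
  unfolding psi_def Let_def g_def L_def H_def Jl_def by auto

lemma g_low_mem: "a \<in> {1..n} \<Longrightarrow> a \<le> m \<Longrightarrow> g a \<in> {1..n} - J"
  using g_low nth_mem[of "a-1" H] lenH setH by fastforce
lemma g_high_mem: "a \<in> {1..n} \<Longrightarrow> m < a \<Longrightarrow> g a \<in> J"
  using g_high nth_mem[of "a-1-m" Jl] lenJl setJl m_le by fastforce

lemma g_piJ: "g (piJ n J y) = y" using piJ_eq permutes_inverses(1)[OF g_perm] by simp
lemma piJ_in: "y \<in> {1..n} \<Longrightarrow> piJ n J y \<in> {1..n}"
  by (rule iffD2[OF permutes_in_image[OF piJ_perm]])

lemma SJ_to: "z \<in> SJ n J \<Longrightarrow> inT (z \<circ> g)"
proof -
  assume z: "z \<in> SJ n J"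
  have zS: "z \<in> Sn n" using z unfolding SJ_def by blast
  have "z \<circ> g \<in> Sn n" using zS permutes_compose[OF g_perm] unfolding Sn_def by blast
  moreover have "ok a ((z \<circ> g) a)" if a: "a \<in> {1..n}" for a
    unfolding ok_def
  proof (intro conjI impI)
    assume "a \<le> m"
    then have "g a \<in> {1..n} - J" using g_low_mem a by blast
    then show "(z \<circ> g) a \<le> g a" using z unfolding SJ_def by auto
  next
    assume "m < a"
    then have "g a \<in> J" using g_high_mem a by blast
    then show "g a \<le> (z \<circ> g) a" using z unfolding SJ_def by auto
  qed
  ultimately show ?thesis unfolding inT_def by blast
qed

lemma SJ_from: "inT w \<Longrightarrow> w \<circ> piJ n J \<in> SJ n J"
proof -
  assume w: "inT w"
  have wS: "w \<in> Sn n" and okw: "\<And>a. a \<in> {1..n} \<Longrightarrow> ok a (w a)" using w unfolding inT_def by blast+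
  have "w \<circ> piJ n J \<in> Sn n" using wS permutes_compose[OF piJ_perm] unfolding Sn_def by blast
  moreover have "\<forall>j\<in>J. (w \<circ> piJ n J) j \<ge> j"
  proof
    fix j assume j: "j \<in> J"
    then have jn: "j \<in> {1..n}" using J by blast
    let ?a = "piJ n J j"
    have a: "?a \<in> {1..n}" using piJ_in[OF jn] .
    have ga: "g ?a = j" by (rule g_piJ)
    have "\<not> ?a \<le> m" using g_low_mem[OF a] ga j by auto
    then show "(w \<circ> piJ n J) j \<ge> j" using okw[OF a] ga unfolding ok_def by auto
  qed
  moreover have "\<forall>j\<in>{1..n} - J. (w \<circ> piJ n J) j \<le> j"
  proof
    fix j assume j: "j \<in> {1..n} - J"
    then have jn: "j \<in> {1..n}" by blast
    let ?a = "piJ n J j"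
    have a: "?a \<in> {1..n}" using piJ_in[OF jn] .
    have ga: "g ?a = j" by (rule g_piJ)
    have "\<not> m < ?a" using g_high_mem[OF a] ga j by auto
    then show "(w \<circ> piJ n J) j \<le> j" using okw[OF a] ga unfolding ok_def by auto
  qed
  ultimately show ?thesis unfolding SJ_def by blast
qed

lemma bij_part: "bij_betw (\<lambda>z. z \<circ> g) (SJ n J) {w. inT w}"
proof (rule bij_betw_byWitness[where f'="\<lambda>w. w \<circ> piJ n J"])
  show "\<forall>a\<in>SJ n J. a \<circ> g \<circ> piJ n J = a" using g_piJ by (auto simp: fun_eq_iff)
  show "\<forall>a'\<in>{w. inT w}. a' \<circ> piJ n J \<circ> g = a'" using piJ_g by (auto simp: fun_eq_iff)
  show "(\<lambda>z. z \<circ> g) ` SJ n J \<subseteq> {w. inT w}" using SJ_to by blast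
  show "(\<lambda>w. w \<circ> piJ n J) ` {w. inT w} \<subseteq> SJ n J" using SJ_from by blast
qed

lemma psi_pt: "psi n J (pt n z) = pt n (z \<circ> g)"
  unfolding psi_eq pt_def using g_in by (auto simp: fun_eq_iff)

lemma psi_inj: "inj_on (psi n J) {x. \<forall>i. i \<notin> {1..n} \<longrightarrow> x i = 0}"
proof (rule inj_onI)
  fix x y assume x: "x \<in> {x. \<forall>i. i \<notin> {1..n} \<longrightarrow> x i = 0}" and y: "y \<in> {x. \<forall>i. i \<notin> {1..n} \<longrightarrow> x i = 0}"
    and e: "psi n J x = psi n J y"
  show "x = y"
  proof
    fix b show "x b = y b"
    proof (cases "b \<in> {1..n}")
      case True
      then have "piJ n J b \<in> {1..n}" by (rule piJ_in)
      then have "x (g (piJ n J b)) = y (g (piJ n J b))" using fun_cong[OF e, of "piJ n J b"]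
        unfolding psi_eq by simp
      then show ?thesis using g_piJ by simp
    next
      case False then show ?thesis using x y by simp
    qed
  qed
qed

lemma psi_lin: "psi n J (\<lambda>i. \<Sum>y\<in>F. u y * y i) = (\<lambda>i. \<Sum>y\<in>F. u y * psi n J y i)"
  unfolding psi_eq by (auto simp: fun_eq_iff)

lemma main:
  shows "inj_on (psi n J) {x. \<forall>i. i \<notin> {1..n} \<longrightarrow> x i = 0}
    \<and> psi n J ` Br n J = Q n id (inv (piJ n J))
    \<and> (\<forall>z\<in>SJ n J. psi n J (pt n z) = pt n (z \<circ> inv (piJ n J)))
    \<and> bij_betw (\<lambda>z. z \<circ> inv (piJ n J)) (SJ n J)
        {w \<in> Sn n. bruhat_le n id w \<and> bruhat_le n w (inv (piJ n J))}
    \<and> piJ n J \<in> SJ n J \<and> id \<in> SJ n J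
    \<and> psi n J (pt n (piJ n J)) = pt n id
    \<and> psi n J (pt n id) = pt n (inv (piJ n J))"
proof -
  have bij: "bij_betw (\<lambda>z. z \<circ> g) (SJ n J) {w \<in> Sn n. bruhat_le n id w \<and> bruhat_le n w g}"
    using bij_part T_char by simp
  have img: "(\<lambda>z. z \<circ> g) ` SJ n J = {w \<in> Sn n. bruhat_le n id w \<and> bruhat_le n w g}"
    using bij by (simp add: bij_betw_def)
  have ptZ: "pt n ` SJ n J \<subseteq> {x. \<forall>i. i \<notin> {1..n} \<longrightarrow> x i = 0}" unfolding pt_def by auto
  have injA: "inj_on (psi n J) (pt n ` SJ n J)" using inj_on_subset[OF psi_inj ptZ] .
  have "psi n J ` Br n J = convR (psi n J ` pt n ` SJ n J)"
    unfolding Br_def by (rule convR_image[OF injA psi_lin])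
  also have "psi n J ` pt n ` SJ n J = pt n ` (\<lambda>z. z \<circ> g) ` SJ n J"
    by (simp add: image_image psi_pt)
  finally have conv: "psi n J ` Br n J = Q n id g" unfolding Q_def img .
  have idSJ: "id \<in> SJ n J" unfolding SJ_def Sn_def by (simp add: permutes_id)
  have idS: "id \<in> Sn n" unfolding Sn_def by (simp add: permutes_id)
  have "id \<in> {w \<in> Sn n. bruhat_le n id w \<and> bruhat_le n w g}"
    using idS bruhat_le.refl[OF idS] id_le_all[OF gS] by simp
  then have "id \<in> {w. inT w}" unfolding T_char .
  then have "id \<circ> piJ n J \<in> SJ n J" using SJ_from by blast
  then have piSJ: "piJ n J \<in> SJ n J" by simp
  have e1: "psi n J (pt n (piJ n J)) = pt n id"
    using psi_pt[of "piJ n J"] piJ_g by (simp add: comp_def id_def)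
  have e2: "psi n J (pt n id) = pt n g" using psi_pt[of id] by simp
  show ?thesis unfolding inv_piJ
  proof (intro conjI ballI)
    fix z show "psi n J (pt n z) = pt n (z \<circ> g)" by (rule psi_pt)
  qed (fact psi_inj conv bij piSJ idSJ e1 e2)+
qed

end

theorem lemma4p2:
  fixes n :: nat and J :: "nat set"
  assumes "J \<subseteq> {1..n}"
  shows "inj_on (psi n J) {x. \<forall>i. i \<notin> {1..n} \<longrightarrow> x i = 0}
    \<and> psi n J ` Br n J = Q n id (inv (piJ n J))
    \<and> (\<forall>z\<in>SJ n J. psi n J (pt n z) = pt n (z \<circ> inv (piJ n J)))
    \<and> bij_betw (\<lambda>z. z \<circ> inv (piJ n J)) (SJ n J)
        {w \<in> Sn n. bruhat_le n id w \<and> bruhat_le n w (inv (piJ n J))}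
    \<and> piJ n J \<in> SJ n J \<and> id \<in> SJ n J
    \<and> psi n J (pt n (piJ n J)) = pt n id
    \<and> psi n J (pt n id) = pt n (inv (piJ n J))"
proof -
  interpret BS n J using assms by unfold_locales
  show ?thesis by (rule main)
qed


end
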